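(* For every prior $(q_H,q_1,q_2,q_L)$ with strictly positive entries summing to $1$ and every receiver type $i\in[-1/2,1/2]$, all types accept the recommendation in the limit $R\to 1$ and in the limit $R\to 0$; that is, the limits $\lim_{R\to1}\big(\Delta_O^B(R)-i\,\Delta_S^B(R)\big)$ and $\lim_{R\to0}\big(\Delta_O^B(R)-i\,\Delta_S^B(R)\big)$ exist and are nonnegative.
   Context: Setting. Consumer types are $i\in[-1/2,1/2]$, distributed according to a continuous cumulative distribution function $F$ with full support on $[-1/2,1/2]$. A product has a quality vector $(Q_1,Q_2)\in\{0,1\}^2$; a type-$i$ consumer gets payoff $(1/2+i)Q_1+(1/2-i)Q_2$ from it. The versions $(1,1),(1,0),(0,1),(0,0)$ have prior probabilities $q_H,q_1,q_2,q_L$. Given a threshold $R\in(0,1)$, a sender with type drawn from $F$ gives a buy recommendation $B$ if her payoff from the product is at least $R$ and a don't-buy recommendation otherwise. Let $\phi_1(R)=1-F(R-1/2)$, $\phi_2(R)=F(1/2-R)$, $\pi^B(R)=q_H+q_1\phi_1(R)+q_2\phi_2(R)$, and posteriors after $B$: $p^B_H=q_H/\pi^B$, $p^B_1=q_1\phi_1(R)/\pi^B$, $p^B_2=q_2\phi_2(R)/\pi^B$. Define $\Delta_O^B(R)=p_H^B-q_H+\frac{p_1^B-q_1}{2}+\frac{p_2^B-q_2}{2}$ and $\Delta_S^B(R)=(p_2^B-q_2)-(p_1^B-q_1)$. A receiver of type $i$ accepts the recommendation at threshold $R$ if and only if $\Delta_O^B(R)\ge i\,\Delta_S^B(R)$ (equivalently,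 the expected payoff of the product after a buy recommendation is at least that of an unrecommended product, and after a don't-buy recommendation at most that). *)

theory Defs
  imports "HOL-Analysis.Analysis"
begin

definition cdf_full_support :: "(real \<Rightarrow> real) \<Rightarrow> bool" where
  "cdf_full_support F \<longleftrightarrow> mono F \<and> continuous_on UNIV F
     \<and> (\<forall>x. x \<le> -1/2 \<longrightarrow> F x = 0) \<and> (\<forall>x. x \<ge> 1/2 \<longrightarrow> F x = 1)
     \<and> strict_mono_on {-1/2..1/2} F"

definition phi1 :: "(real \<Rightarrow> real) \<Rightarrow> real \<Rightarrow> real" where
  "phi1 F R = 1 - F (R - 1/2)"

definition phi2 :: "(real \<Rightarrow> real) \<Rightarrow> real \<Rightarrow> real" where
  "phi2 F R = F (1/2 - R)"

definition piB :: "(real \<Rightarrow> real) \<Rightarrow> real \<Rightarrow> real \<Rightarrow> real \<Rightarrow> real \<Rightarrow> real" where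
  "piB F qH q1 q2 R = qH + q1 * phi1 F R + q2 * phi2 F R"

definition pBH :: "(real \<Rightarrow> real) \<Rightarrow> real \<Rightarrow> real \<Rightarrow> real \<Rightarrow> real \<Rightarrow> real" where
  "pBH F qH q1 q2 R = qH / piB F qH q1 q2 R"

definition pB1 :: "(real \<Rightarrow> real) \<Rightarrow> real \<Rightarrow> real \<Rightarrow> real \<Rightarrow> real \<Rightarrow> real" where
  "pB1 F qH q1 q2 R = q1 * phi1 F R / piB F qH q1 q2 R"

definition pB2 :: "(real \<Rightarrow> real) \<Rightarrow> real \<Rightarrow> real \<Rightarrow> real \<Rightarrow> real \<Rightarrow> real" where
  "pB2 F qH q1 q2 R = q2 * phi2 F R / piB F qH q1 q2 R"

definition DeltaOB :: "(real \<Rightarrow> real) \<Rightarrow> real \<Rightarrow> real \<Rightarrow> real \<Rightarrow> real \<Rightarrow> real" where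
  "DeltaOB F qH q1 q2 R = pBH F qH q1 q2 R - qH + (pB1 F qH q1 q2 R - q1) / 2
                          + (pB2 F qH q1 q2 R - q2) / 2"

definition DeltaSB :: "(real \<Rightarrow> real) \<Rightarrow> real \<Rightarrow> real \<Rightarrow> real \<Rightarrow> real \<Rightarrow> real" where
  "DeltaSB F qH q1 q2 R = (pB2 F qH q1 q2 R - q2) - (pB1 F qH q1 q2 R - q1)"

end

theory Submission
  imports Defs
begin

theorem proposition2:
  fixes F :: "real \<Rightarrow> real" and qH q1 q2 qL i :: real
  assumes "cdf_full_support F"
    and "qH > 0" and "q1 > 0" and "q2 > 0" and "qL > 0"
    and "qH + q1 + q2 + qL = 1"
    and "i \<in> {-1/2..1/2}"
  shows "(\<exists>L. ((\<lambda>R. DeltaOB F qH q1 q2 R - i * DeltaSB F qH q1 q2 R) \<longlongrightarrow> L) (at_left 1) \<and> L \<ge> 0)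
       \<and> (\<exists>L. ((\<lambda>R. DeltaOB F qH q1 q2 R - i * DeltaSB F qH q1 q2 R) \<longlongrightarrow> L) (at_right 0) \<and> L \<ge> 0)"
proof -
  note cdf = assms(1)[unfolded cdf_full_support_def]
  have mono: "mono F" and cF: "continuous_on UNIV F"
    and lo: "\<And>x. x \<le> -1/2 \<Longrightarrow> F x = 0" and hi: "\<And>x. x \<ge> 1/2 \<Longrightarrow> F x = 1"
    using cdf by auto
  have F01: "0 \<le> F x \<and> F x \<le> 1" for x
  proof -
    have "F (min x (-1)) \<le> F x" "F x \<le> F (max x 1)" using mono by (auto simp: mono_def)
    moreover have "F (min x (-1)) = 0" "F (max x 1) = 1" using lo hi by auto
    ultimately show ?thesis by simp
  qed
  have isF: "isCont F x" for x using cF by (simp add: continuous_on_eq_continuous_at)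
  have piPos: "piB F qH q1 q2 R > 0" for R
  proof -
    have "q1 * phi1 F R \<ge> 0" "q2 * phi2 F R \<ge> 0"
      using F01 assms by (auto simp: phi1_def phi2_def)
    thus ?thesis using assms(2) by (simp add: piB_def)
  qed
  define g where "g = (\<lambda>R. DeltaOB F qH q1 q2 R - i * DeltaSB F qH q1 q2 R)"
  have ph: "isCont (phi1 F) x" "isCont (phi2 F) x" for x
    unfolding phi1_def phi2_def
    by (auto intro!: continuous_intros isCont_o2[OF _ isF])
  have pic: "isCont (piB F qH q1 q2) x" for x
    unfolding piB_def by (auto intro!: continuous_intros ph)
  have gc: "isCont g x" for x
    unfolding g_def DeltaOB_def DeltaSB_def pBH_def pB1_def pB2_def
    using piPos[of x] by (auto intro!: continuous_intros pic ph)
  have p11: "phi1 F 1 = 0" "phi2 F 1 = 0" "phi1 F 0 = 1" "phi2 F 0 = 1"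
    using lo hi by (auto simp: phi1_def phi2_def)
  have ib: "-1/2 \<le> i" "i \<le> 1/2" using assms(7) by auto
  have g1: "g 1 \<ge> 0"
  proof -
    have "g 1 = 1 - qH - q1/2 - q2/2 - i * (q1 - q2)"
      unfolding g_def DeltaOB_def DeltaSB_def pBH_def pB1_def pB2_def piB_def p11
      using assms(2) by (simp add: field_simps)
    moreover have "\<bar>i * (q1 - q2)\<bar> \<le> (q1 + q2)/2"
    proof -
      have "\<bar>i * (q1 - q2)\<bar> = \<bar>i\<bar> * \<bar>q1 - q2\<bar>" by (simp add: abs_mult)
      also have "\<dots> \<le> (1/2) * \<bar>q1 - q2\<bar>" using ib by (intro mult_right_mono) auto
      also have "\<dots> \<le> (q1+q2)/2" using assms by auto
      finally show ?thesis .
    qed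
    ultimately show ?thesis using assms by auto
  qed
  have g0: "g 0 \<ge> 0"
  proof -
    define P where "P = qH + q1 + q2"
    have P: "P > 0" "P \<le> 1" using assms by (auto simp: P_def)
    have pi0: "piB F qH q1 q2 0 = P" unfolding piB_def p11 P_def by simp
    have "g 0 = qH/P - qH + (q1/P - q1)/2 + (q2/P - q2)/2 - i * ((q2/P - q2) - (q1/P - q1))"
      unfolding g_def DeltaOB_def DeltaSB_def pBH_def pB1_def pB2_def pi0 p11 by simp
    also have "\<dots> = (1/P - 1) * (qH + (q1+q2)/2 - i * (q2 - q1))"
      using P by (simp add: field_simps)
    finally have "g 0 = (1/P - 1) * (qH + (q1+q2)/2 - i * (q2 - q1))" .
    moreover have "\<bar>i * (q2 - q1)\<bar> \<le> (q1 + q2)/2"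
    proof -
      have "\<bar>i * (q2 - q1)\<bar> = \<bar>i\<bar> * \<bar>q2 - q1\<bar>" by (simp add: abs_mult)
      also have "\<dots> \<le> (1/2) * \<bar>q2 - q1\<bar>" using ib by (intro mult_right_mono) auto
      also have "\<dots> \<le> (q1+q2)/2" using assms by auto
      finally show ?thesis .
    qed
    moreover have "1/P - 1 \<ge> 0" using P by (simp add: field_simps)
    moreover have "qH + (q1+q2)/2 - i * (q2 - q1) \<ge> 0"
      using calculation(2) assms(2) abs_le_D1[of "i * (q2 - q1)"] by linarith
    ultimately show ?thesis by simp
  qed
  have L1: "(g \<longlongrightarrow> g 1) (at_left 1)"
    by (rule tendsto_mono[OF at_le[OF subset_UNIV] gc[of 1, unfolded isCont_def]])
  have L0: "(g \<longlongrightarrow> g 0) (at_right 0)"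
    by (rule tendsto_mono[OF at_le[OF subset_UNIV] gc[of 0, unfolded isCont_def]])
  show ?thesis
    unfolding g_def[symmetric] using L1 L0 g1 g0 by blast
qed

end
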